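(* Consider the lattice Boltzmann scheme described in the context under acoustic scaling, with a prepared initialisation $w_i=\sum_{\mathfrak{e}}w_{i,\mathfrak{e}}x^{\mathfrak{e}}$ (finitely supported coefficients) satisfying $$\sum_{\mathfrak{e}}w_{1,\mathfrak{e}}=1,\qquad \sum_{\mathfrak{e}}w_{1,\mathfrak{e}}\mathfrak{e}^{\mathfrak{n}}=0\ \text{ for every } |\mathfrak{n}|=1,$$ and, for every $r\in\{2,\dots,q\}$ with $\mathcal{G}_{1r}\neq0$, $\sum_{\mathfrak{e}}w_{r,\mathfrak{e}}=\epsilon_r$. Then for every $n\in\mathbb{N}^*$ the modified equation of the $n$-th starting scheme reads $\partial_t\phi(0,x)+\lambda(\mathcal{G}_{11}+\sum_{r=2}^q\mathcal{G}_{1r}\epsilon_r)\phi(0,x)=O(\Delta x)$, i.e. the starting schemes are consistent with the modified equation of the bulk finite difference scheme at order $O(\Delta x)$. Moreover the initial datum $m_1(0,\cdot)=w_1m_1^\circ$ is consistent with the initial datum of the Cauchy problem up to order $O(\Delta x^2)$, i.e. $(w_1\phi)(x)=\phi(x)+O(\Delta x^2)$ for smooth $\phi$.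
   Context: Fix $d\ge1$, $q\ge1$, velocities $c_1,\dots,c_q\in\mathbb{Z}^d$, invertible $M$, $S=\mathrm{diag}(s_1,\dots,s_q)$ with $s_i\in(0,2]$ for $i\ge2$, $\epsilon\in\mathbb{R}^q$, $\epsilon_1=1$, all independent of $\Delta x$; $K=I-S(I-\epsilon e_1^T)$; acoustic scaling $\Delta t=\Delta x/\lambda$ with $\lambda>0$ fixed. Shifts $(x_\ell\phi)(x)=\phi(x-\Delta xe_\ell)$, $x^{\mathfrak{e}}=\prod x_\ell^{\mathfrak{e}_\ell}$, $\mathfrak{e}^{\mathfrak{n}}=\prod\mathfrak{e}_\ell^{\mathfrak{n}_\ell}$. $T=M\mathrm{diag}(x^{c_1},\dots,x^{c_q})M^{-1}$, $E=TK$, $(z\phi)(t)=\phi(t+\Delta t)$. $\mathcal{G}=M\mathrm{diag}(c_1\cdot\nabla,\dots,c_q\cdot\nabla)M^{-1}$. The target Cauchy problem is $\partial_tu+V\cdot\nabla u=0$, $u(0,\cdot)=u^\circ$, with point-wise lattice discretisation $m_1^\circ$ of $u^\circ$. Initialisation $m(0,x)=w\,m_1^\circ(x)$. The $n$-th starting scheme is $m_1(n\Delta t,x)=(E^nw)_1m_1^\circ(x)$; its modified equation is obtained by substituting a smooth $\phi$ into $(z^n\phi)(0,x)=((E^nw)_1\phi(0,\cdot))(x)$, Taylor-expanding in $\Delta x$, and dividing the first-order terms by $n\Delta x/\lambda$. The bulk finite difference scheme is $z^{Q+1-q}\det(zI-E)m_1=0$ ($Q$ the number of $i\ge2$ with $s_i\ne1$),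 whose modified equation at leading order is $\partial_t\phi+\lambda(\mathcal{G}_{11}+\sum_{r\ge2}\mathcal{G}_{1r}\epsilon_r)\phi=O(\Delta x)$. *)

theory Defs
  imports "HOL-Analysis.Analysis" "HOL-Library.Landau_Symbols"
begin

fun Ck :: "nat \<Rightarrow> ('a::real_normed_vector \<Rightarrow> 'b::real_normed_vector) \<Rightarrow> bool" where
  "Ck 0 f = continuous_on UNIV f"
| "Ck (Suc k) f = ((\<forall>x. f differentiable (at x)) \<and> continuous_on UNIV f \<and>
      (\<forall>v. Ck k (\<lambda>x. frechet_derivative f (at x) v)))"

definition smooth :: "('a::real_normed_vector \<Rightarrow> 'b::real_normed_vector) \<Rightarrow> bool" where
  "smooth f \<longleftrightarrow> (\<forall>k. Ck k f)"

definition rvec :: "int ^ 'd \<Rightarrow> real ^ 'd" where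
  "rvec e = (\<chi> l. of_int (e $ l))"

definition supp :: "(int ^ 'd \<Rightarrow> real) \<Rightarrow> (int ^ 'd) set" where
  "supp P = {e. P e \<noteq> 0}"

text \<open>Action of the shift polynomial  P = sum_e P_e x^e  on a lattice function:
  (x^e phi)(x) = phi(x - dx e).\<close>
definition shift_apply :: "real \<Rightarrow> (int ^ 'd \<Rightarrow> real) \<Rightarrow> (real ^ 'd \<Rightarrow> real) \<Rightarrow> real ^ 'd \<Rightarrow> real" where
  "shift_apply dx P \<phi> x = (\<Sum>e\<in>supp P. P e * \<phi> (x - dx *\<^sub>R rvec e))"

text \<open>Relaxation matrix K = I - S(I - eps e_1^T), S = diag(s_1..s_q), indices 1..q.\<close>
definition Kmat :: "(nat \<Rightarrow> real) \<Rightarrow> (nat \<Rightarrow> real) \<Rightarrow> nat \<Rightarrow> nat \<Rightarrow> real" where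
  "Kmat s \<epsilon> i j = (if i = j then 1 else 0) - s i * ((if i = j then 1 else 0) - \<epsilon> i * (if j = 1 then 1 else 0))"

text \<open>Action of T = M diag(x^{c_1},...,x^{c_q}) M^{-1} on a vector of lattice functions.\<close>
definition T_apply :: "nat \<Rightarrow> real \<Rightarrow> (nat \<Rightarrow> int ^ 'd) \<Rightarrow> (nat \<Rightarrow> nat \<Rightarrow> real) \<Rightarrow> (nat \<Rightarrow> nat \<Rightarrow> real)
    \<Rightarrow> (nat \<Rightarrow> real ^ 'd \<Rightarrow> real) \<Rightarrow> nat \<Rightarrow> real ^ 'd \<Rightarrow> real" where
  "T_apply q dx c M Minv f i x =
     (\<Sum>k=1..q. M i k * (\<Sum>j=1..q. Minv k j * f j (x - dx *\<^sub>R rvec (c k))))"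

definition E_apply :: "nat \<Rightarrow> real \<Rightarrow> (nat \<Rightarrow> int ^ 'd) \<Rightarrow> (nat \<Rightarrow> nat \<Rightarrow> real) \<Rightarrow> (nat \<Rightarrow> nat \<Rightarrow> real)
    \<Rightarrow> (nat \<Rightarrow> real) \<Rightarrow> (nat \<Rightarrow> real)
    \<Rightarrow> (nat \<Rightarrow> real ^ 'd \<Rightarrow> real) \<Rightarrow> nat \<Rightarrow> real ^ 'd \<Rightarrow> real" where
  "E_apply q dx c M Minv s \<epsilon> f =
     T_apply q dx c M Minv (\<lambda>j y. \<Sum>l=1..q. Kmat s \<epsilon> j l * f l y)"

definition start_scheme :: "nat \<Rightarrow> real \<Rightarrow> (nat \<Rightarrow> int ^ 'd) \<Rightarrow> (nat \<Rightarrow> nat \<Rightarrow> real) \<Rightarrow> (nat \<Rightarrow> nat \<Rightarrow> real)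
    \<Rightarrow> (nat \<Rightarrow> real) \<Rightarrow> (nat \<Rightarrow> real) \<Rightarrow> (nat \<Rightarrow> int ^ 'd \<Rightarrow> real) \<Rightarrow> nat
    \<Rightarrow> (real ^ 'd \<Rightarrow> real) \<Rightarrow> real ^ 'd \<Rightarrow> real" where
  "start_scheme q dx c M Minv s \<epsilon> w n \<phi> x =
     ((E_apply q dx c M Minv s \<epsilon> ^^ n) (\<lambda>i. shift_apply dx (w i) \<phi>)) 1 x"

text \<open>Coefficient vector of the first-order operator G_{1r} = sum_j M_{1j} (M^{-1})_{jr} c_j . grad.\<close>
definition Gvec :: "nat \<Rightarrow> (nat \<Rightarrow> int ^ 'd) \<Rightarrow> (nat \<Rightarrow> nat \<Rightarrow> real) \<Rightarrow> (nat \<Rightarrow> nat \<Rightarrow> real) \<Rightarrow> nat \<Rightarrow> real ^ 'd" where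
  "Gvec q c M Minv r = (\<Sum>j=1..q. (M 1 j * Minv j r) *\<^sub>R rvec (c j))"

definition G_apply :: "nat \<Rightarrow> (nat \<Rightarrow> int ^ 'd) \<Rightarrow> (nat \<Rightarrow> nat \<Rightarrow> real) \<Rightarrow> (nat \<Rightarrow> nat \<Rightarrow> real) \<Rightarrow> nat
    \<Rightarrow> (real \<times> (real ^ 'd) \<Rightarrow> real) \<Rightarrow> real \<times> (real ^ 'd) \<Rightarrow> real" where
  "G_apply q c M Minv r \<psi> p = frechet_derivative \<psi> (at p) (0, Gvec q c M Minv r)"

end

theory Submission imports Defs begin

lemma deriv_line:
  fixes F :: "'a::real_normed_vector \<Rightarrow> real"
  assumes "\<forall>y. F differentiable (at y)"
  shows "((\<lambda>h. F (p + h *\<^sub>R v)) has_real_derivative frechet_derivative F (at (p + h *\<^sub>R v)) v) (at h)"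
proof -
  have d1: "((\<lambda>h. p + h *\<^sub>R v) has_derivative (\<lambda>t. t *\<^sub>R v)) (at h)"
    by (auto intro!: derivative_eq_intros)
  have d2: "(F has_derivative frechet_derivative F (at (p + h *\<^sub>R v))) (at (p + h *\<^sub>R v))"
    using assms frechet_derivative_works by blast
  have lin: "linear (frechet_derivative F (at (p + h *\<^sub>R v)))"
    using d2 has_derivative_bounded_linear bounded_linear.linear by blast
  have "(F \<circ> (\<lambda>h. p + h *\<^sub>R v) has_derivative frechet_derivative F (at (p + h *\<^sub>R v)) \<circ> (\<lambda>t. t *\<^sub>R v)) (at h)"
    by (rule diff_chain_at[OF d1 d2])
  moreover have "frechet_derivative F (at (p + h *\<^sub>R v)) \<circ> (\<lambda>t. t *\<^sub>R v) = (*) (frechet_derivative F (at (p + h *\<^sub>R v)) v)"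
    using linear_cmul[OF lin] by (auto simp: fun_eq_iff)
  ultimately show ?thesis by (simp add: has_field_derivative_def o_def)
qed

lemma taylor2:
  fixes f :: "'a::real_normed_vector \<Rightarrow> real"
  assumes "smooth f"
  shows "(\<lambda>h. f (p + h *\<^sub>R v) - f p - h * frechet_derivative f (at p) v) \<in> O[at_right 0](\<lambda>h. h^2)"
proof -
  have C2: "Ck (Suc (Suc 0)) f" using assms smooth_def by blast
  define g where "g = (\<lambda>x. frechet_derivative f (at x) v)"
  have df: "\<forall>y. f differentiable (at y)" using C2 by simp
  have C1: "Ck (Suc 0) g" using C2 by (simp add: g_def)
  have dg: "\<forall>y. g differentiable (at y)" using C1 by simp
  have cg: "continuous_on UNIV (\<lambda>x. frechet_derivative g (at x) v)" using C1 by simp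
  define u where "u = (\<lambda>h. f (p + h *\<^sub>R v))"
  define u1 where "u1 = (\<lambda>h. g (p + h *\<^sub>R v))"
  define u2 where "u2 = (\<lambda>h. frechet_derivative g (at (p + h *\<^sub>R v)) v)"
  have du: "\<And>h. (u has_real_derivative u1 h) (at h)"
    unfolding u_def u1_def g_def using deriv_line[OF df] by blast
  have du1: "\<And>h. (u1 has_real_derivative u2 h) (at h)"
    unfolding u1_def u2_def using deriv_line[OF dg] by blast
  have cu2: "continuous_on {0..1} u2"
  proof -
    have "continuous_on UNIV ((\<lambda>x. frechet_derivative g (at x) v) \<circ> (\<lambda>h. p + h *\<^sub>R v))"
      by (rule continuous_on_compose) (auto intro!: continuous_intros continuous_on_subset[OF cg])
    then show ?thesis unfolding u2_def o_def by (rule continuous_on_subset) auto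
  qed
  obtain B where B: "\<forall>t\<in>{0..1}. norm (u2 t) \<le> B"
    using compact_imp_bounded[OF compact_continuous_image[OF cu2 compact_Icc]]
    unfolding bounded_iff by auto
  have "\<forall>\<^sub>F h in at_right 0. norm (u h - u 0 - h * u1 0) \<le> B * norm (h^2)"
  proof -
    have ev: "\<forall>\<^sub>F h in at_right (0::real). h \<in> {0<..<1}"
      by (rule eventually_at_right_real) simp
    show ?thesis
    proof (rule eventually_mono[OF ev])
      fix h :: real assume h: "h \<in> {0<..<1}"
      obtain z where z: "0 < z" "z < h" "u h - u 0 = (h - 0) * u1 z"
        using MVT2[of 0 h u u1] du h by auto
      obtain y where y: "0 < y" "y < z" "u1 z - u1 0 = (z - 0) * u2 y"
        using MVT2[of 0 z u1 u2] du1 z by auto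
      have "u h - u 0 - h * u1 0 = h * z * u2 y" using z y by (simp add: algebra_simps)
      moreover have "\<bar>u2 y\<bar> \<le> B" using B y z h by auto
      moreover have "h * z \<le> h * h" using z h by auto
      ultimately have "\<bar>u h - u 0 - h * u1 0\<bar> \<le> h * h * B"
        using z h by (simp add: abs_mult) (metis mult_mono abs_ge_zero order_trans mult_nonneg_nonneg less_imp_le)
      then show "norm (u h - u 0 - h * u1 0) \<le> B * norm (h^2)"
        by (simp add: power2_eq_square algebra_simps)
    qed
  qed
  then have "(\<lambda>h. u h - u 0 - h * u1 0) \<in> O[at_right 0](\<lambda>h. h^2)" by (rule bigoI)
  then show ?thesis by (simp add: u_def u1_def g_def)
qed


definition Epoly :: "nat \<Rightarrow> (nat \<Rightarrow> int ^ 'd) \<Rightarrow> (nat \<Rightarrow> nat \<Rightarrow> real) \<Rightarrow> (nat \<Rightarrow> nat \<Rightarrow> real)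
    \<Rightarrow> (nat \<Rightarrow> real) \<Rightarrow> (nat \<Rightarrow> real) \<Rightarrow> (nat \<Rightarrow> int ^ 'd \<Rightarrow> real) \<Rightarrow> nat \<Rightarrow> int ^ 'd \<Rightarrow> real" where
  "Epoly q c M Minv s \<epsilon> P i e =
     (\<Sum>k=1..q. M i k * (\<Sum>j=1..q. Minv k j * (\<Sum>l=1..q. Kmat s \<epsilon> j l * P l (e - c k))))"

definition Qs :: "(int ^ 'd \<Rightarrow> real) \<Rightarrow> (int ^ 'd \<Rightarrow> 'b::real_vector) \<Rightarrow> 'b" where
  "Qs P g = (\<Sum>e\<in>supp P. P e *\<^sub>R g e)"

lemma Qs_superset:
  assumes "finite A" "supp P \<subseteq> A"
  shows "Qs P g = (\<Sum>e\<in>A. P e *\<^sub>R g e)"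
  unfolding Qs_def
  by (rule sum.mono_neutral_left) (use assms in \<open>auto simp: supp_def\<close>)

lemma shiftsum:
  assumes "finite A" "(\<lambda>e. e + c) ` supp P \<subseteq> A" "finite (supp P)"
  shows "(\<Sum>e\<in>A. P (e - c) *\<^sub>R g e) = Qs P (\<lambda>e. g (e + c))"
proof -
  have z: "\<forall>i\<in>A - (\<lambda>e. e + c) ` supp P. P (i - c) *\<^sub>R g i = 0"
  proof
    fix i assume "i \<in> A - (\<lambda>e. e + c) ` supp P"
    then have "i - c \<notin> supp P" by (auto simp: image_iff)
    then show "P (i - c) *\<^sub>R g i = 0" by (simp add: supp_def)
  qed
  have "(\<Sum>e\<in>A. P (e - c) *\<^sub>R g e) = (\<Sum>e\<in>(\<lambda>e. e + c) ` supp P. P (e - c) *\<^sub>R g e)"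
    by (rule sum.mono_neutral_right[OF assms(1) assms(2) z])
  also have "\<dots> = (\<Sum>e\<in>supp P. P e *\<^sub>R g (e + c))"
    by (subst sum.reindex) (auto simp: inj_on_def)
  finally show ?thesis by (simp add: Qs_def)
qed

lemma Epoly_supp:
  "supp (Epoly q c M Minv s \<epsilon> P i) \<subseteq> (\<Union>k\<in>{1..q}. \<Union>l\<in>{1..q}. (\<lambda>e. e + c k) ` supp (P l))"
proof
  fix e assume e: "e \<in> supp (Epoly q c M Minv s \<epsilon> P i)"
  show "e \<in> (\<Union>k\<in>{1..q}. \<Union>l\<in>{1..q}. (\<lambda>e. e + c k) ` supp (P l))"
  proof (rule ccontr)
    assume nU: "\<not> ?thesis"
    have "\<forall>k\<in>{1..q}. \<forall>l\<in>{1..q}. P l (e - c k) = 0"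
    proof (intro ballI)
      fix k l assume k: "k \<in> {1..q}" and l: "l \<in> {1..q}"
      have "e \<notin> (\<lambda>e. e + c k) ` supp (P l)" using nU k l by blast
      then have "e - c k \<notin> supp (P l)" by (metis diff_add_cancel image_eqI)
      then show "P l (e - c k) = 0" by (simp add: supp_def)
    qed
    then have "Epoly q c M Minv s \<epsilon> P i e = 0" by (simp add: Epoly_def)
    then show False using e by (simp add: supp_def)
  qed
qed

lemma Epoly_fin:
  assumes "\<forall>l\<in>{1..q}. finite (supp (P l))"
  shows "finite (supp (Epoly q c M Minv s \<epsilon> P i))"
  by (rule finite_subset[OF Epoly_supp]) (use assms in auto)

lemma Qs_Epoly:
  assumes fin: "\<forall>l\<in>{1..q}. finite (supp (P l))"
  shows "Qs (Epoly q c M Minv s \<epsilon> P i) g =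
    (\<Sum>k=1..q. M i k *\<^sub>R (\<Sum>j=1..q. Minv k j *\<^sub>R (\<Sum>l=1..q. Kmat s \<epsilon> j l *\<^sub>R Qs (P l) (\<lambda>e. g (e + c k)))))"
proof -
  define U where "U = (\<Union>k\<in>{1..q}. \<Union>l\<in>{1..q}. (\<lambda>e. e + c k) ` supp (P l))"
  have fU: "finite U" unfolding U_def using fin by auto
  have "Qs (Epoly q c M Minv s \<epsilon> P i) g = (\<Sum>e\<in>U. Epoly q c M Minv s \<epsilon> P i e *\<^sub>R g e)"
    by (rule Qs_superset[OF fU]) (unfold U_def, rule Epoly_supp)
  also have "\<dots> = (\<Sum>k=1..q. M i k *\<^sub>R (\<Sum>j=1..q. Minv k j *\<^sub>R (\<Sum>l=1..q. Kmat s \<epsilon> j l *\<^sub>R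
        (\<Sum>e\<in>U. P l (e - c k) *\<^sub>R g e))))"
    unfolding Epoly_def
    by (simp add: sum_distrib_left scaleR_sum_left scaleR_sum_right sum.swap[of _ U] scaleR_scaleR mult.assoc)
  also have "\<dots> = (\<Sum>k=1..q. M i k *\<^sub>R (\<Sum>j=1..q. Minv k j *\<^sub>R (\<Sum>l=1..q. Kmat s \<epsilon> j l *\<^sub>R Qs (P l) (\<lambda>e. g (e + c k)))))"
  proof (intro sum.cong refl arg_cong2[where f="(*\<^sub>R)"])
    fix k l assume k: "k \<in> {1..q}" and l: "l \<in> {1..q}"
    show "(\<Sum>e\<in>U. P l (e - c k) *\<^sub>R g e) = Qs (P l) (\<lambda>e. g (e + c k))"
      by (rule shiftsum[OF fU]) (use k l fin in \<open>unfold U_def, blast+\<close>)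
  qed
  finally show ?thesis .
qed

lemma rvec_add: "rvec (a + b) = rvec a + rvec b"
  by (simp add: rvec_def vec_eq_iff)

lemma shift_Qs: "shift_apply dx P \<phi> x = Qs P (\<lambda>e. \<phi> (x - dx *\<^sub>R rvec e))"
  by (simp add: shift_apply_def Qs_def)

lemma E_step:
  assumes fin: "\<forall>l\<in>{1..q}. finite (supp (P l))"
  shows "E_apply q dx c M Minv s \<epsilon> (\<lambda>i. shift_apply dx (P i) \<phi>) i x
       = shift_apply dx (Epoly q c M Minv s \<epsilon> P i) \<phi> x"
  unfolding shift_Qs Qs_Epoly[OF fin] E_apply_def T_apply_def
  by (simp add: rvec_add algebra_simps)


lemma delta_sc: "finite A \<Longrightarrow> (\<Sum>l\<in>A. (if r = l then 1 else 0) *\<^sub>R (Y l::'b::real_vector)) = (if r \<in> A then Y r else 0)"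
proof -
  assume "finite A"
  have "(\<Sum>l\<in>A. (if r = l then 1 else 0) *\<^sub>R Y l) = (\<Sum>l\<in>A. if r = l then Y l else 0)"
    by (rule sum.cong) auto
  then show ?thesis using \<open>finite A\<close> by (simp add: sum.delta)
qed

lemma delta_sc': "finite A \<Longrightarrow> (\<Sum>l\<in>A. (if l = r then 1 else 0) *\<^sub>R (Y l::'b::real_vector)) = (if r \<in> A then Y r else 0)"
  using delta_sc[of A r Y] by (simp add: eq_commute)

lemma inv_apply:
  fixes Y :: "nat \<Rightarrow> 'b::real_vector"
  assumes i: "i \<in> {1..q}"
    and R: "\<forall>i\<in>{1..q}. \<forall>j\<in>{1..q}. (\<Sum>k=1..q. M i k * Minv k j) = (if i = j then 1 else 0)"
  shows "(\<Sum>k=1..q. M i k *\<^sub>R (\<Sum>j=1..q. Minv k j *\<^sub>R Y j)) = Y i"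
proof -
  have "(\<Sum>k=1..q. M i k *\<^sub>R (\<Sum>j=1..q. Minv k j *\<^sub>R Y j)) = (\<Sum>j=1..q. (\<Sum>k=1..q. M i k * Minv k j) *\<^sub>R Y j)"
    by (simp add: scaleR_sum_right scaleR_sum_left) (rule sum.swap)
  also have "\<dots> = (\<Sum>j=1..q. (if i = j then 1 else 0) *\<^sub>R Y j)"
    using R i by (intro sum.cong refl) simp
  also have "\<dots> = Y i" using i by (simp add: delta_sc)
  finally show ?thesis .
qed

lemma Kmat_apply:
  fixes Y :: "nat \<Rightarrow> 'b::real_vector"
  assumes r: "r \<in> {1..q}" and q: "q \<ge> 1"
  shows "(\<Sum>l=1..q. Kmat s \<epsilon> r l *\<^sub>R Y l) = Y r - s r *\<^sub>R (Y r - \<epsilon> r *\<^sub>R Y 1)"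
proof -
  have "(\<Sum>l=1..q. Kmat s \<epsilon> r l *\<^sub>R Y l) =
     (\<Sum>l=1..q. (if r = l then 1 else 0) *\<^sub>R Y l) - s r *\<^sub>R ((\<Sum>l=1..q. (if r = l then 1 else 0) *\<^sub>R Y l)
        - \<epsilon> r *\<^sub>R (\<Sum>l=1..q. (if l = 1 then 1 else 0) *\<^sub>R Y l))"
    by (simp add: Kmat_def algebra_simps sum.distrib sum_subtractf scaleR_sum_right)
  also have "\<dots> = Y r - s r *\<^sub>R (Y r - \<epsilon> r *\<^sub>R Y 1)"
    using r q by (simp add: delta_sc delta_sc')
  finally show ?thesis .
qed


lemma W_fin:
  assumes "\<forall>l\<in>{1..q}. finite (supp (w l))"
  shows "\<forall>l\<in>{1..q}. finite (supp ((Epoly q c M Minv s \<epsilon> ^^ n) w l))"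
proof (induction n)
  case 0 then show ?case using assms by simp
next
  case (Suc n) then show ?case by (simp add: Epoly_fin)
qed

lemma E_iter:
  assumes "\<forall>l\<in>{1..q}. finite (supp (w l))"
  shows "(E_apply q dx c M Minv s \<epsilon> ^^ n) (\<lambda>i. shift_apply dx (w i) \<phi>)
       = (\<lambda>i. shift_apply dx ((Epoly q c M Minv s \<epsilon> ^^ n) w i) \<phi>)"
proof (induction n)
  case 0 then show ?case by simp
next
  case (Suc n)
  show ?case
    using W_fin[OF assms, of n] by (simp add: Suc fun_eq_iff E_step)
qed

lemma start_eq:
  assumes "\<forall>l\<in>{1..q}. finite (supp (w l))"
  shows "start_scheme q dx c M Minv s \<epsilon> w n \<phi> x = shift_apply dx ((Epoly q c M Minv s \<epsilon> ^^ n) w 1) \<phi> x"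
  unfolding start_scheme_def E_iter[OF assms] by simp

lemma mass_rec:
  assumes fin: "\<forall>l\<in>{1..q}. finite (supp (P l))"
    and R: "\<forall>i\<in>{1..q}. \<forall>j\<in>{1..q}. (\<Sum>k=1..q. M i k * Minv k j) = (if i = j then 1 else 0)"
    and i: "i \<in> {1..q}"
  shows "Qs (Epoly q c M Minv s \<epsilon> P i) (\<lambda>_. 1::real) = (\<Sum>l=1..q. Kmat s \<epsilon> i l *\<^sub>R Qs (P l) (\<lambda>_. 1::real))"
  unfolding Qs_Epoly[OF fin] using inv_apply[OF i R, of "\<lambda>j. \<Sum>l=1..q. Kmat s \<epsilon> j l * Qs (P l) (\<lambda>_. 1::real)"] by simp

lemma mom_rec:
  assumes fin: "\<forall>l\<in>{1..q}. finite (supp (P l))"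
    and R: "\<forall>i\<in>{1..q}. \<forall>j\<in>{1..q}. (\<Sum>k=1..q. M i k * Minv k j) = (if i = j then 1 else 0)"
    and q: "q \<ge> 1" and eps1: "\<epsilon> 1 = 1"
  shows "Qs (Epoly q c M Minv s \<epsilon> P 1) rvec = Qs (P 1) rvec
     + (\<Sum>j=1..q. (\<Sum>l=1..q. Kmat s \<epsilon> j l *\<^sub>R Qs (P l) (\<lambda>_. 1::real)) *\<^sub>R Gvec q c M Minv j)"
proof -
  define a where "a l = Qs (P l) (\<lambda>_. 1::real)" for l
  define b where "b l = Qs (P l) rvec" for l
  have split: "Qs (P l) (\<lambda>e. rvec (e + c k)) = b l + a l *\<^sub>R rvec (c k)" for l k
    by (simp add: a_def b_def Qs_def rvec_add scaleR_add_right sum.distrib scaleR_sum_left)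
  have i1: "(1::nat) \<in> {1..q}" using q by simp
  have "Qs (Epoly q c M Minv s \<epsilon> P 1) rvec =
     (\<Sum>k=1..q. M 1 k *\<^sub>R (\<Sum>j=1..q. Minv k j *\<^sub>R (\<Sum>l=1..q. Kmat s \<epsilon> j l *\<^sub>R b l)))
   + (\<Sum>k=1..q. M 1 k *\<^sub>R (\<Sum>j=1..q. Minv k j *\<^sub>R ((\<Sum>l=1..q. Kmat s \<epsilon> j l *\<^sub>R a l) *\<^sub>R rvec (c k))))"
    unfolding Qs_Epoly[OF fin] split
    by (simp add: scaleR_add_right sum.distrib scaleR_sum_left)
  also have "(\<Sum>k=1..q. M 1 k *\<^sub>R (\<Sum>j=1..q. Minv k j *\<^sub>R (\<Sum>l=1..q. Kmat s \<epsilon> j l *\<^sub>R b l))) = b 1"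
    using inv_apply[OF i1 R, of "\<lambda>j. \<Sum>l=1..q. Kmat s \<epsilon> j l *\<^sub>R b l"] Kmat_apply[OF i1 q, of s \<epsilon> b] eps1 by simp
  also have "(\<Sum>k=1..q. M 1 k *\<^sub>R (\<Sum>j=1..q. Minv k j *\<^sub>R ((\<Sum>l=1..q. Kmat s \<epsilon> j l *\<^sub>R a l) *\<^sub>R rvec (c k))))
      = (\<Sum>j=1..q. (\<Sum>l=1..q. Kmat s \<epsilon> j l *\<^sub>R a l) *\<^sub>R Gvec q c M Minv j)"
    unfolding Gvec_def
    by (simp add: scaleR_sum_right scaleR_scaleR mult_ac) (rule sum.swap)
  finally show ?thesis by (simp add: a_def b_def)
qed


lemma shift_expand:
  fixes \<psi> :: "'a::real_normed_vector \<Rightarrow> real"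
  assumes sm: "smooth \<psi>" and S: "finite S"
  shows "(\<lambda>dx. (\<Sum>e\<in>S. P e * \<psi> (p + dx *\<^sub>R V e)) - (\<Sum>e\<in>S. P e) * \<psi> p
            - dx * frechet_derivative \<psi> (at p) (\<Sum>e\<in>S. P e *\<^sub>R V e)) \<in> O[at_right 0](\<lambda>h. h^2)"
proof -
  define D where "D = frechet_derivative \<psi> (at p)"
  have "\<psi> differentiable (at p)" using sm unfolding smooth_def by (metis Ck.simps(2))
  then have lin: "linear D" unfolding D_def
    using frechet_derivative_works has_derivative_bounded_linear bounded_linear.linear by blast
  have eq: "(\<Sum>e\<in>S. P e * \<psi> (p + dx *\<^sub>R V e)) - (\<Sum>e\<in>S. P e) * \<psi> p - dx * D (\<Sum>e\<in>S. P e *\<^sub>R V e)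
      = (\<Sum>e\<in>S. P e * (\<psi> (p + dx *\<^sub>R V e) - \<psi> p - dx * D (V e)))" for dx
    by (simp add: real_vector.linear_sum[OF lin] linear_cmul[OF lin] sum_distrib_left sum_distrib_right
        sum_subtractf sum.distrib algebra_simps)
  have "(\<lambda>dx. \<Sum>e\<in>S. P e * (\<psi> (p + dx *\<^sub>R V e) - \<psi> p - dx * D (V e))) \<in> O[at_right 0](\<lambda>h. h^2)"
  proof (rule big_sum_in_bigo)
    fix e assume "e \<in> S"
    show "(\<lambda>dx. P e * (\<psi> (p + dx *\<^sub>R V e) - \<psi> p - dx * D (V e))) \<in> O[at_right 0](\<lambda>h. h^2)"
    proof (cases "P e = 0")
      case True then show ?thesis by (simp add: zero_in_bigo)
    next
      case False
      then show ?thesis using taylor2[OF sm, of p "V e"]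
        by (simp add: landau_o.big.cmult_in_iff D_def)
    qed
  qed
  then show ?thesis unfolding D_def[symmetric] eq .
qed


lemma smooth_lin: "smooth f \<Longrightarrow> linear (frechet_derivative f (at p))"
proof -
  assume "smooth f"
  then have "f differentiable (at p)" unfolding smooth_def by (metis Ck.simps(2))
  then show ?thesis
    using frechet_derivative_works has_derivative_bounded_linear bounded_linear.linear by blast
qed

theorem corollary2:
  fixes q :: nat and lam :: real
    and c :: "nat \<Rightarrow> int ^ 'd"
    and M Minv :: "nat \<Rightarrow> nat \<Rightarrow> real"
    and s \<epsilon> :: "nat \<Rightarrow> real"
    and w :: "nat \<Rightarrow> int ^ 'd \<Rightarrow> real"
  assumes q_pos: "q \<ge> 1"
    and lam_pos: "lam > 0"
    and M_inv_right: "\<forall>i\<in>{1..q}. \<forall>j\<in>{1..q}. (\<Sum>k=1..q. M i k * Minv k j) = (if i = j then 1 else 0)"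
    and M_inv_left: "\<forall>i\<in>{1..q}. \<forall>j\<in>{1..q}. (\<Sum>k=1..q. Minv i k * M k j) = (if i = j then 1 else 0)"
    and s_range: "\<forall>i\<in>{2..q}. 0 < s i \<and> s i \<le> 2"
    and eps1: "\<epsilon> 1 = 1"
    and w_fin: "\<forall>i\<in>{1..q}. finite (supp (w i))"
    and w1_mass: "(\<Sum>e\<in>supp (w 1). w 1 e) = 1"
    and w1_first: "\<forall>l. (\<Sum>e\<in>supp (w 1). w 1 e * of_int (e $ l)) = 0"
    and wr_mass: "\<forall>r\<in>{2..q}. Gvec q c M Minv r \<noteq> 0 \<longrightarrow> (\<Sum>e\<in>supp (w r). w r e) = \<epsilon> r"
  shows
    "(\<forall>(\<phi> :: real \<times> (real ^ 'd) \<Rightarrow> real) x (n :: nat). smooth \<phi> \<and> n \<ge> 1 \<longrightarrow>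
        (\<lambda>dx. (\<phi> (real n * dx / lam, x)
                 - start_scheme q dx c M Minv s \<epsilon> w n (\<lambda>y. \<phi> (0, y)) x) / (real n * dx / lam)
              - (frechet_derivative \<phi> (at (0, x)) (1, 0)
                 + lam * (G_apply q c M Minv 1 \<phi> (0, x)
                        + (\<Sum>r=2..q. \<epsilon> r * G_apply q c M Minv r \<phi> (0, x)))))
        \<in> O[at_right 0](\<lambda>dx. dx))
     \<and> (\<forall>(\<phi> :: real ^ 'd \<Rightarrow> real) x. smooth \<phi> \<longrightarrow>
        (\<lambda>dx. shift_apply dx (w 1) \<phi> x - \<phi> x) \<in> O[at_right 0](\<lambda>dx. dx ^ 2))"
proof -
  have i1: "(1::nat) \<in> {1..q}" using q_pos by simp
  have fin1: "finite (supp (w 1))" using w_fin i1 by blast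
  define W where "W n = (Epoly q c M Minv s \<epsilon> ^^ n) w" for n
  define a where "a n l = Qs (W n l) (\<lambda>_. 1::real)" for n l
  define G where "G = Gvec q c M Minv 1 + (\<Sum>r=2..q. \<epsilon> r *\<^sub>R Gvec q c M Minv r)"
  have Wfin: "\<forall>l\<in>{1..q}. finite (supp (W n l))" for n using W_fin[OF w_fin] unfolding W_def by blast
  have WSuc: "W (Suc n) = Epoly q c M Minv s \<epsilon> (W n)" for n by (simp add: W_def)
  have arec: "a (Suc n) i = (\<Sum>l=1..q. Kmat s \<epsilon> i l * a n l)" if "i \<in> {1..q}" for n i
    using mass_rec[OF Wfin M_inv_right that] unfolding a_def WSuc by simp
  have a1: "a n 1 = 1" for n
  proof (induction n)
    case 0 then show ?case using w1_mass by (simp add: a_def W_def Qs_def)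
  next
    case (Suc n) then show ?case
      using arec[OF i1, of n] Kmat_apply[OF i1 q_pos, of s \<epsilon> "a n"] eps1 by simp
  qed
  have ar: "a n r = \<epsilon> r" if r: "r \<in> {2..q}" "Gvec q c M Minv r \<noteq> 0" for n r
  proof (induction n)
    case 0 then show ?case using wr_mass r by (simp add: a_def W_def Qs_def)
  next
    case (Suc n)
    have r1: "r \<in> {1..q}" using r by simp
    show ?case
      using arec[OF r1, of n] Kmat_apply[OF r1 q_pos, of s \<epsilon> "a n"] Suc a1[of n] by (simp add: algebra_simps)
  qed
  have aG: "(\<Sum>j=1..q. a n j *\<^sub>R Gvec q c M Minv j) = G" for n
  proof -
    have "(\<Sum>j=1..q. a n j *\<^sub>R Gvec q c M Minv j) = a n 1 *\<^sub>R Gvec q c M Minv 1 + (\<Sum>j=2..q. a n j *\<^sub>R Gvec q c M Minv j)"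
      using sum.atLeast_Suc_atMost[OF q_pos, of "\<lambda>j. a n j *\<^sub>R Gvec q c M Minv j"] by (simp add: numeral_2_eq_2)
    also have "(\<Sum>j=2..q. a n j *\<^sub>R Gvec q c M Minv j) = (\<Sum>r=2..q. \<epsilon> r *\<^sub>R Gvec q c M Minv r)"
    proof (rule sum.cong[OF refl])
      fix r assume "r \<in> {2..q}"
      then show "a n r *\<^sub>R Gvec q c M Minv r = \<epsilon> r *\<^sub>R Gvec q c M Minv r"
        using ar[of r n] by (cases "Gvec q c M Minv r = 0") auto
    qed
    finally show ?thesis using a1 by (simp add: G_def)
  qed
  have bn: "Qs (W n 1) rvec = real n *\<^sub>R G" for n
  proof (induction n)
    case 0
    have "Qs (w 1) rvec = 0"
      using w1_first by (simp add: Qs_def vec_eq_iff sum_component rvec_def)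
    then show ?case by (simp add: W_def)
  next
    case (Suc n)
    have "Qs (W (Suc n) 1) rvec = Qs (W n 1) rvec
     + (\<Sum>j=1..q. (\<Sum>l=1..q. Kmat s \<epsilon> j l *\<^sub>R Qs (W n l) (\<lambda>_. 1::real)) *\<^sub>R Gvec q c M Minv j)"
      unfolding WSuc by (rule mom_rec[where P="W n" and M=M and Minv=Minv and q=q and \<epsilon>=\<epsilon> and s=s and c=c, OF Wfin[of n] M_inv_right q_pos eps1])
    also have "(\<Sum>j=1..q. (\<Sum>l=1..q. Kmat s \<epsilon> j l *\<^sub>R Qs (W n l) (\<lambda>_. 1::real)) *\<^sub>R Gvec q c M Minv j)
       = (\<Sum>j=1..q. a (Suc n) j *\<^sub>R Gvec q c M Minv j)"
    proof (rule sum.cong[OF refl])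
      fix j assume j: "j \<in> {1..q}"
      show "(\<Sum>l=1..q. Kmat s \<epsilon> j l *\<^sub>R Qs (W n l) (\<lambda>_. 1::real)) *\<^sub>R Gvec q c M Minv j = a (Suc n) j *\<^sub>R Gvec q c M Minv j"
        using arec[OF j, of n] unfolding a_def by simp
    qed
    finally show ?case using Suc aG by (simp add: algebra_simps)
  qed
  show ?thesis
  proof (intro conjI allI impI)
    fix \<phi> :: "real ^ 'd \<Rightarrow> real" and x
    assume sm: "smooth \<phi>"
    have lin: "linear (frechet_derivative \<phi> (at x))" by (rule smooth_lin[OF sm])
    have h: "(\<lambda>dx. (\<Sum>e\<in>supp (w 1). w 1 e * \<phi> (x + dx *\<^sub>R (- rvec e))) - (\<Sum>e\<in>supp (w 1). w 1 e) * \<phi> x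
            - dx * frechet_derivative \<phi> (at x) (\<Sum>e\<in>supp (w 1). w 1 e *\<^sub>R (- rvec e))) \<in> O[at_right 0](\<lambda>h. h^2)"
      by (rule shift_expand[OF sm fin1])
    have z: "(\<Sum>e\<in>supp (w 1). w 1 e *\<^sub>R (- rvec e)) = 0"
      using bn[of 0] by (simp add: W_def Qs_def sum_negf)
    have "frechet_derivative \<phi> (at x) 0 = 0" using lin by (rule real_vector.linear_0)
    then show "(\<lambda>dx. shift_apply dx (w 1) \<phi> x - \<phi> x) \<in> O[at_right 0](\<lambda>dx. dx ^ 2)"
      using h unfolding z w1_mass by (simp add: shift_apply_def)
  next
    fix \<phi> :: "real \<times> (real ^ 'd) \<Rightarrow> real" and x :: "real ^ 'd" and n :: nat
    assume asm: "smooth \<phi> \<and> n \<ge> 1"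
    then have sm: "smooth \<phi>" and n1: "n \<ge> 1" by auto
    define p where "p = (0::real, x)"
    define D where "D = frechet_derivative \<phi> (at p)"
    have lin: "linear D" unfolding D_def by (rule smooth_lin[OF sm])
    define P where "P = W n 1"
    have finP: "finite (supp P)" using Wfin i1 unfolding P_def by blast
    define B where "B dx = (\<Sum>e\<in>supp P. P e * \<phi> (p + dx *\<^sub>R (0, - rvec e))) - (\<Sum>e\<in>supp P. P e) * \<phi> p
            - dx * D (\<Sum>e\<in>supp P. P e *\<^sub>R (0, - rvec e))" for dx
    have hB: "B \<in> O[at_right 0](\<lambda>h. h^2)"
      unfolding B_def D_def by (rule shift_expand[OF sm finP])
    define A where "A dx = \<phi> (p + dx *\<^sub>R (real n / lam, 0)) - \<phi> p - dx * D (real n / lam, 0)" for dx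
    have hA: "A \<in> O[at_right 0](\<lambda>h. h^2)"
      unfolding A_def D_def by (rule taylor2[OF sm])
    have m1: "(\<Sum>e\<in>supp P. P e) = 1" using a1[of n] by (simp add: a_def P_def Qs_def)
    have v1: "(\<Sum>e\<in>supp P. P e *\<^sub>R (0::real, - rvec e)) = (- real n) *\<^sub>R (0, G)"
      using bn[of n] by (simp add: prod_eq_iff fst_sum snd_sum P_def Qs_def sum_negf)
    have st: "start_scheme q dx c M Minv s \<epsilon> w n (\<lambda>y. \<phi> (0, y)) x
        = (\<Sum>e\<in>supp P. P e * \<phi> (p + dx *\<^sub>R (0, - rvec e)))" for dx
      unfolding start_eq[OF w_fin] by (simp add: shift_apply_def P_def W_def p_def)
    have tt: "\<phi> (real n * dx / lam, x) = \<phi> (p + dx *\<^sub>R (real n / lam, 0))" for dx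
      by (simp add: p_def mult.commute)
    have Dt: "D (real n / lam, 0) = (real n / lam) * D (1, 0)"
      using linear_cmul[OF lin, of "real n / lam" "(1, 0)"] by simp
    have DG: "D (0, G) = G_apply q c M Minv 1 \<phi> (0, x) + (\<Sum>r=2..q. \<epsilon> r * G_apply q c M Minv r \<phi> (0, x))"
    proof -
      have "(0::real, G) = (0, Gvec q c M Minv 1) + (\<Sum>r=2..q. \<epsilon> r *\<^sub>R (0, Gvec q c M Minv r))"
        by (simp add: G_def prod_eq_iff fst_sum snd_sum)
      then have "D (0, G) = D (0, Gvec q c M Minv 1) + (\<Sum>r=2..q. D (\<epsilon> r *\<^sub>R (0, Gvec q c M Minv r)))"
        by (simp only: real_vector.linear_add[OF lin] real_vector.linear_sum[OF lin])
      also have "\<dots> = D (0, Gvec q c M Minv 1) + (\<Sum>r=2..q. \<epsilon> r * D (0, Gvec q c M Minv r))"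
        by (simp only: linear_cmul[OF lin] real_scaleR_def)
      finally show ?thesis by (simp add: G_apply_def D_def p_def)
    qed
    have Dv: "D ((- real n) *\<^sub>R (0, G)) = - real n * D (0, G)"
      by (simp only: linear_cmul[OF lin] real_scaleR_def)
    have "(\<lambda>dx. (A dx - B dx) * (lam / real n) * inverse dx) \<in> O[at_right 0](\<lambda>dx. dx^2 * inverse dx)"
    proof (rule landau_o.big.mult_right)
      have "(\<lambda>dx. A dx - B dx) \<in> O[at_right 0](\<lambda>h. h^2)" by (rule sum_in_bigo(2)[OF hA hB])
      then show "(\<lambda>dx. (A dx - B dx) * (lam / real n)) \<in> O[at_right 0](\<lambda>h. h^2)"
        using n1 lam_pos by (subst landau_o.big.cmult_in_iff') auto
    qed
    moreover have "(\<lambda>dx::real. dx^2 * inverse dx) = (\<lambda>dx. dx)"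
      by (rule ext) (metis mult.assoc power2_eq_square right_inverse mult_1_right mult_zero_left)
    ultimately have main: "(\<lambda>dx. (A dx - B dx) * (lam / real n) * inverse dx) \<in> O[at_right 0](\<lambda>dx. dx)"
      by simp
    have ev: "\<forall>\<^sub>F dx in at_right (0::real). (\<phi> (real n * dx / lam, x)
                 - start_scheme q dx c M Minv s \<epsilon> w n (\<lambda>y. \<phi> (0, y)) x) / (real n * dx / lam)
              - (frechet_derivative \<phi> (at (0, x)) (1, 0)
                 + lam * (G_apply q c M Minv 1 \<phi> (0, x)
                        + (\<Sum>r=2..q. \<epsilon> r * G_apply q c M Minv r \<phi> (0, x))))
           = (A dx - B dx) * (lam / real n) * inverse dx"
    proof (rule eventually_mono[OF eventually_at_right_less])
      fix dx :: real assume dx: "0 < dx"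
      have nz: "real n > 0" using n1 by simp
      show "(\<phi> (real n * dx / lam, x)
                 - start_scheme q dx c M Minv s \<epsilon> w n (\<lambda>y. \<phi> (0, y)) x) / (real n * dx / lam)
              - (frechet_derivative \<phi> (at (0, x)) (1, 0)
                 + lam * (G_apply q c M Minv 1 \<phi> (0, x)
                        + (\<Sum>r=2..q. \<epsilon> r * G_apply q c M Minv r \<phi> (0, x))))
           = (A dx - B dx) * (lam / real n) * inverse dx"
        unfolding tt st DG[symmetric] A_def B_def m1 v1 Dv Dt
        using dx nz lam_pos by (simp add: D_def p_def field_simps)
    qed
    show "(\<lambda>dx. (\<phi> (real n * dx / lam, x)
                 - start_scheme q dx c M Minv s \<epsilon> w n (\<lambda>y. \<phi> (0, y)) x) / (real n * dx / lam)
              - (frechet_derivative \<phi> (at (0, x)) (1, 0)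
                 + lam * (G_apply q c M Minv 1 \<phi> (0, x)
                        + (\<Sum>r=2..q. \<epsilon> r * G_apply q c M Minv r \<phi> (0, x)))))
        \<in> O[at_right 0](\<lambda>dx. dx)"
      using main landau_o.big.in_cong[OF ev] by simp
  qed
qed

end
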